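(* Let $G$ be a finite simple graph with a perfect matching $M$ and let $\mathcal{C}$ be an optimal edge $2$-colouring of $G$; write $\mathrm{cl}(e)$ for the colour of an edge $e$ and $\mathrm{mcl}(u)$ for the colour of the edge of $M$ at vertex $u$. Let $T$ be a rooted tree with $|V(T)|>1$ which is a subgraph of $G\setminus M$, with root $r$ and set of leaves $L$, equipped with a depth-first ordering and the induced total order $\preceq$ (see context). Suppose that for every $u\in L\cup\{r\}$, every edge of $T$ incident with $u$ has colour $\mathrm{mcl}(u)$. Then there is a set $P=\{(u_i,v_i): i=1,\ldots,|L|\}$ of pairs of vertices of $T$ such that: (a) for $i\ne j$, $u_i\ne u_j$; (b) $u_i\prec v_i$ for all $1\le i\le |L|$; (c) $\mathrm{mcl}(u_i)=\mathrm{mcl}(v_i)$ for all $i$; (d) the path $u_iTv_i$ is monochromatic, with all its edges coloured $\mathrm{mcl}(u_i)$, for all $i$; (e) for every internal vertex $z$ of the path $u_iTv_i$, $\mathrm{mcl}(z)\ne \mathrm{mcl}(u_i)$, for all $i$; (f) for $i\ne j$ with $u_iv_i\in M$ and $u_jv_j\in M$, the paths $u_iTv_i$ and $u_jTv_j$ do not share an internal vertex.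
   Context: $G\setminus M$ is the spanning subgraph of $G$ with edge set $E(G)\setminus M$. An edge $2$-colouring assigns colours to edges (not necessarily properly) so that every vertex sees at most $2$ distinct colours on its incident edges; optimal means the number of colours used is maximum. For a rooted tree $T$, the leaves are the non-root vertices with no children. A depth-first ordering of $T$ is an indexing $\mathrm{dfs}_T: V(T)\to\{1,\dots,|V(T)|\}$ obtained from a depth-first traversal from the root, so that if $v$ is a descendant of $u$ then $\mathrm{dfs}_T(u)<\mathrm{dfs}_T(v)$ (the root has the minimum index). The order $\preceq$ on $V(T)$ is defined by $u\preceq v$ iff $\mathrm{dfs}_T(u)\ge \mathrm{dfs}_T(v)$ (so the root is the maximum element); $u\prec v$ means $u\preceq v$ and $u\ne v$. For vertices $x,y$ of $T$, $xTy$ denotes the unique $x$–$y$ path in $T$; its internal vertices are those other than $x,y$. *)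

theory Defs
  imports Main
begin

definition simple_graph :: "'a set \<Rightarrow> 'a set set \<Rightarrow> bool" where
  "simple_graph V E \<longleftrightarrow> finite V \<and> (\<forall>e\<in>E. e \<subseteq> V \<and> card e = 2)"

definition perfect_matching :: "'a set \<Rightarrow> 'a set set \<Rightarrow> 'a set set \<Rightarrow> bool" where
  "perfect_matching V E M \<longleftrightarrow> M \<subseteq> E \<and> (\<forall>v\<in>V. \<exists>!e. e \<in> M \<and> v \<in> e)"

definition edge_2_colouring :: "'a set \<Rightarrow> 'a set set \<Rightarrow> ('a set \<Rightarrow> nat) \<Rightarrow> bool" where
  "edge_2_colouring V E col \<longleftrightarrow> (\<forall>v\<in>V. card (col ` {e\<in>E. v \<in> e}) \<le> 2)"

definition num_colours :: "'a set set \<Rightarrow> ('a set \<Rightarrow> nat) \<Rightarrow> nat" where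
  "num_colours E col = card (col ` E)"

definition optimal_2_colouring :: "'a set \<Rightarrow> 'a set set \<Rightarrow> ('a set \<Rightarrow> nat) \<Rightarrow> bool" where
  "optimal_2_colouring V E col \<longleftrightarrow> edge_2_colouring V E col \<and>
     (\<forall>col'. edge_2_colouring V E col' \<longrightarrow> num_colours E col' \<le> num_colours E col)"

definition mcl :: "'a set set \<Rightarrow> ('a set \<Rightarrow> nat) \<Rightarrow> 'a \<Rightarrow> nat" where
  "mcl M col u = col (THE e. e \<in> M \<and> u \<in> e)"

definition is_walk :: "'a set set \<Rightarrow> 'a list \<Rightarrow> bool" where
  "is_walk F p \<longleftrightarrow> p \<noteq> [] \<and> (\<forall>i. Suc i < length p \<longrightarrow> {p ! i, p ! Suc i} \<in> F)"

definition is_path :: "'a set set \<Rightarrow> 'a list \<Rightarrow> bool" where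
  "is_path F p \<longleftrightarrow> is_walk F p \<and> distinct p"

definition path_edges :: "'a list \<Rightarrow> 'a set set" where
  "path_edges p = {{p ! i, p ! Suc i} | i. Suc i < length p}"

definition internal_vertices :: "'a list \<Rightarrow> 'a set" where
  "internal_vertices p = set (butlast (tl p))"

definition is_cycle :: "'a set set \<Rightarrow> 'a list \<Rightarrow> bool" where
  "is_cycle F p \<longleftrightarrow> is_path F p \<and> length p \<ge> 3 \<and> {last p, hd p} \<in> F"

definition is_tree :: "'a set \<Rightarrow> 'a set set \<Rightarrow> bool" where
  "is_tree VT ET \<longleftrightarrow> VT \<noteq> {} \<and> (\<forall>e\<in>ET. e \<subseteq> VT \<and> card e = 2) \<and>
     (\<forall>x\<in>VT. \<forall>y\<in>VT. \<exists>p. is_path ET p \<and> hd p = x \<and> last p = y) \<and>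
     \<not> (\<exists>p. is_cycle ET p)"

definition tpath :: "'a set set \<Rightarrow> 'a \<Rightarrow> 'a \<Rightarrow> 'a list" where
  "tpath ET x y = (THE p. is_path ET p \<and> hd p = x \<and> last p = y)"

definition descendants :: "'a set \<Rightarrow> 'a set set \<Rightarrow> 'a \<Rightarrow> 'a \<Rightarrow> 'a set" where
  "descendants VT ET r u = {v\<in>VT. u \<in> set (tpath ET r v)}"

definition children :: "'a set \<Rightarrow> 'a set set \<Rightarrow> 'a \<Rightarrow> 'a \<Rightarrow> 'a set" where
  "children VT ET r u = {v \<in> descendants VT ET r u. v \<noteq> u \<and> {u, v} \<in> ET}"

definition leaves :: "'a set \<Rightarrow> 'a set set \<Rightarrow> 'a \<Rightarrow> 'a set" where
  "leaves VT ET r = {v\<in>VT. v \<noteq> r \<and> children VT ET r v = {}}"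

(* depth-first (preorder) ordering: a bijection onto {1..|V(T)|} in which
   every subtree receives a contiguous block of indices starting at its root *)
definition dfs_ordering :: "'a set \<Rightarrow> 'a set set \<Rightarrow> 'a \<Rightarrow> ('a \<Rightarrow> nat) \<Rightarrow> bool" where
  "dfs_ordering VT ET r dfs \<longleftrightarrow> bij_betw dfs VT {1..card VT} \<and>
     (\<forall>u\<in>VT. dfs ` descendants VT ET r u =
        {dfs u ..< dfs u + card (descendants VT ET r u)})"

definition dfs_le :: "('a \<Rightarrow> nat) \<Rightarrow> 'a \<Rightarrow> 'a \<Rightarrow> bool" where
  "dfs_le dfs u v \<longleftrightarrow> dfs u \<ge> dfs v"

definition dfs_less :: "('a \<Rightarrow> nat) \<Rightarrow> 'a \<Rightarrow> 'a \<Rightarrow> bool" where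
  "dfs_less dfs u v \<longleftrightarrow> dfs_le dfs u v \<and> u \<noteq> v"

end

theory Submission imports Defs begin

fun wk :: "'a set set \<Rightarrow> 'a list \<Rightarrow> bool" where
  "wk F [] = False" | "wk F [x] = True" | "wk F (x#y#xs) = ({x,y} \<in> F \<and> wk F (y#xs))"

fun pe :: "'a list \<Rightarrow> 'a set set" where
  "pe [] = {}" | "pe [x] = {}" | "pe (x#y#xs) = insert {x,y} (pe (y#xs))"

lemma is_walk_wk: "is_walk F p = wk F p"
proof (induction p rule: wk.induct)
  case (1 F) then show ?case by (simp add: is_walk_def)
next
  case (2 F x) then show ?case by (simp add: is_walk_def)
next
  case (3 F x y xs)
  have "is_walk F (x#y#xs) \<longleftrightarrow> {x,y} \<in> F \<and> is_walk F (y#xs)"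
    unfolding is_walk_def
  proof safe
    fix i assume "\<forall>i. Suc i < length (x # y # xs) \<longrightarrow> {(x # y # xs) ! i, (x # y # xs) ! Suc i} \<in> F"
      "Suc i < length (y # xs)"
    then show "{(y # xs) ! i, (y # xs) ! Suc i} \<in> F" by (elim allE[of _ "Suc i"]) simp
  next
    assume "\<forall>i. Suc i < length (x # y # xs) \<longrightarrow> {(x # y # xs) ! i, (x # y # xs) ! Suc i} \<in> F"
    then show "{x,y} \<in> F" by (elim allE[of _ 0]) simp
  next
    fix i assume "{x,y} \<in> F" "\<forall>i. Suc i < length (y # xs) \<longrightarrow> {(y # xs) ! i, (y # xs) ! Suc i} \<in> F"
      "Suc i < length (x # y # xs)"
    then show "{(x # y # xs) ! i, (x # y # xs) ! Suc i} \<in> F"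
      by (cases i) auto
  qed
  then show ?case using 3 by simp
qed

lemma pe_img: "path_edges p = (\<lambda>i. {p!i, p!Suc i}) ` {i. Suc i < length p}"
  unfolding path_edges_def by blast

lemma pe_cons2: "path_edges (x#y#xs) = insert {x,y} (path_edges (y#xs))"
proof -
  have "{i. Suc i < length (x#y#xs)} = insert 0 (Suc ` {i. Suc i < length (y#xs)})"
    by (auto simp: image_iff) (case_tac x; auto)
  then show ?thesis unfolding pe_img by (simp add: image_image)
qed

lemma path_edges_pe: "path_edges p = pe p"
  by (induction p rule: pe.induct) (simp_all add: pe_cons2, simp_all add: path_edges_def)

lemma wk_ne: "wk F p \<Longrightarrow> p \<noteq> []" by (cases p) auto

lemma wk_append: "wk F (xs @ y # ys) \<longleftrightarrow> wk F (xs @ [y]) \<and> wk F (y # ys)"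
proof (induction xs)
  case Nil then show ?case by simp
next
  case (Cons a xs) then show ?case by (cases xs) auto
qed

lemma pe_append: "pe (xs @ y # ys) = pe (xs @ [y]) \<union> pe (y # ys)"
proof (induction xs)
  case Nil then show ?case by simp
next
  case (Cons a xs) then show ?case by (cases xs) auto
qed

lemma pe_app_sub1: "pe xs \<subseteq> pe (xs @ ys)"
proof (induction xs)
  case Nil then show ?case by simp
next
  case (Cons a xs) then show ?case by (cases xs; cases ys) auto
qed

lemma pe_app_sub2: "pe ys \<subseteq> pe (xs @ ys)"
proof (induction xs)
  case Nil then show ?case by simp
next
  case (Cons a xs) then show ?case by (cases xs; cases ys) auto
qed

lemma wk_rev: "wk F (rev p) = wk F p"
proof (induction p rule: wk.induct)
  case (3 F x y xs)
  have "wk F (rev (x#y#xs)) = wk F (rev xs @ y # [x])" by simp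
  also have "\<dots> = (wk F (rev xs @ [y]) \<and> wk F [y,x])" by (rule wk_append)
  also have "\<dots> = (wk F (rev (y#xs)) \<and> {x,y} \<in> F)" by (simp add: insert_commute)
  finally show ?case using 3 by auto
qed auto

lemma pe_rev: "pe (rev p) = pe p"
proof (induction p rule: pe.induct)
  case (3 x y xs)
  have "pe (rev (x#y#xs)) = pe (rev xs @ y # [x])" by simp
  also have "\<dots> = pe (rev xs @ [y]) \<union> pe [y,x]" by (rule pe_append)
  also have "\<dots> = pe (rev (y#xs)) \<union> {{x,y}}" by (simp add: insert_commute)
  finally show ?case using 3 by auto
qed auto

lemma wk_edges: "wk F p \<Longrightarrow> pe p \<subseteq> F"
  by (induction p rule: wk.induct) auto

lemma pe_subset_set: "e \<in> pe p \<Longrightarrow> e \<subseteq> set p"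
  by (induction p rule: pe.induct) auto

lemma wk_set: "wk F p \<Longrightarrow> \<forall>e\<in>F. e \<subseteq> S \<Longrightarrow> hd p \<in> S \<Longrightarrow> set p \<subseteq> S"
proof (induction p rule: wk.induct)
  case (3 F x y xs)
  then have "y \<in> S" by auto
  then show ?case using 3 by auto
qed auto

lemma wk_prefix: "wk F (xs @ ys) \<Longrightarrow> xs \<noteq> [] \<Longrightarrow> wk F xs"
proof -
  assume a: "wk F (xs @ ys)" "xs \<noteq> []"
  then obtain xs' z where xz: "xs = xs' @ [z]" by (cases xs rule: rev_cases) auto
  show ?thesis
  proof (cases ys)
    case Nil then show ?thesis using a by simp
  next
    case (Cons y ys')
    then have "wk F (xs' @ z # (y # ys'))" using a xz by simp
    then show ?thesis using xz wk_append[of F xs' z "y # ys'"] by simp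
  qed
qed

lemma wk_suffix: "wk F (xs @ ys) \<Longrightarrow> ys \<noteq> [] \<Longrightarrow> wk F ys"
proof -
  assume a: "wk F (xs @ ys)" "ys \<noteq> []"
  then obtain y ys' where "ys = y # ys'" by (cases ys) auto
  then show ?thesis using a wk_append[of F xs y ys'] by simp
qed

lemma wk_take: "wk F p \<Longrightarrow> 0 < k \<Longrightarrow> wk F (take k p)"
  using wk_prefix[of F "take k p" "drop k p"] wk_ne[of F p] by (cases p) auto

lemma wk_drop: "wk F p \<Longrightarrow> k < length p \<Longrightarrow> wk F (drop k p)"
  using wk_suffix[of F "take k p" "drop k p"] by simp

lemma pe_take: "pe (take k p) \<subseteq> pe p"
  using pe_app_sub1[of "take k p" "drop k p"] by simp

lemma pe_drop: "pe (drop k p) \<subseteq> pe p"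
  using pe_app_sub2[of "drop k p" "take k p"] by simp

lemma wk_join: "wk F (xs @ [m]) \<Longrightarrow> wk F (m # ys) \<Longrightarrow> wk F (xs @ m # ys)"
  using wk_append[of F xs m ys] by simp

lemma last_take_Suc: "k < length p \<Longrightarrow> last (take (Suc k) p) = p ! k"
proof -
  assume k: "k < length p"
  then have ne: "take (Suc k) p \<noteq> []" by (cases p) auto
  have "last (take (Suc k) p) = take (Suc k) p ! (length (take (Suc k) p) - 1)" by (rule last_conv_nth[OF ne])
  also have "length (take (Suc k) p) - 1 = k" using k by simp
  also have "take (Suc k) p ! k = p ! k" by simp
  finally show ?thesis .
qed

lemma wk_to_path:
  "wk F w \<Longrightarrow> \<exists>p. wk F p \<and> distinct p \<and> hd p = hd w \<and> last p = last w \<and> set p \<subseteq> set w \<and> pe p \<subseteq> pe w"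
proof (induction "length w" arbitrary: w rule: less_induct)
  case less
  show ?case
  proof (cases "distinct w")
    case True then show ?thesis using less.prems by (intro exI[of _ w]) auto
  next
    case False
    then obtain xs ys zs y where w: "w = xs @ [y] @ ys @ [y] @ zs" using not_distinct_decomp by blast
    define w' where "w' = xs @ y # zs"
    have wk1: "wk F (xs @ [y])" using less.prems w wk_append[of F xs y "ys @ [y] @ zs"] by simp
    have "wk F (y # ys @ y # zs)" using less.prems w wk_append[of F xs y "ys @ [y] @ zs"] by simp
    then have "wk F ((y # ys) @ y # zs)" by simp
    then have wk2: "wk F (y # zs)" by (rule conjunct2[OF wk_append[of F "y#ys" y zs, THEN iffD1]])
    have wkw': "wk F w'" unfolding w'_def by (rule wk_join[OF wk1 wk2])
    have len: "length w' < length w" unfolding w'_def w by simp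
    have hd: "hd w' = hd w" unfolding w'_def w by (cases xs) auto
    have lst: "last w' = last w" unfolding w'_def w by (cases zs) auto
    have st: "set w' \<subseteq> set w" unfolding w'_def w by auto
    have e0: "w = xs @ y # (ys @ y # zs)" using w by simp
    have e1: "pe w = pe (xs @ [y]) \<union> pe (y # (ys @ y # zs))" unfolding e0 by (rule pe_append)
    have e2: "pe ((y # ys) @ y # zs) = pe ((y # ys) @ [y]) \<union> pe (y # zs)" by (rule pe_append)
    have e3: "pe w' = pe (xs @ [y]) \<union> pe (y # zs)" unfolding w'_def by (rule pe_append)
    have pw: "pe w' \<subseteq> pe w" using e1 e2 e3 by auto
    obtain p where p: "wk F p \<and> distinct p \<and> hd p = hd w' \<and> last p = last w' \<and> set p \<subseteq> set w' \<and> pe p \<subseteq> pe w'"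
      using less.hyps[OF len wkw'] by blast
    show ?thesis apply (rule exI[of _ p]) using p hd lst st pw by auto
  qed
qed

lemma is_path_wk: "is_path F p \<longleftrightarrow> wk F p \<and> distinct p"
  unfolding is_path_def is_walk_wk by simp

locale tr =
  fixes VT :: "'a set" and ET :: "'a set set"
  assumes tree: "is_tree VT ET"
begin

lemma edge_sub: "e \<in> ET \<Longrightarrow> e \<subseteq> VT" using tree unfolding is_tree_def by blast

lemma edge_card: "e \<in> ET \<Longrightarrow> card e = 2" using tree unfolding is_tree_def by blast

lemma edge_ne: "{x,y} \<in> ET \<Longrightarrow> x \<noteq> y"
  using edge_card[of "{x,y}"] by auto

lemma edge_VT: "{x,y} \<in> ET \<Longrightarrow> x \<in> VT \<and> y \<in> VT"
  using edge_sub[of "{x,y}"] by auto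

lemma no_cycle: "\<not> is_cycle ET p" using tree unfolding is_tree_def by blast

lemma connected: "x \<in> VT \<Longrightarrow> y \<in> VT \<Longrightarrow> \<exists>p. wk ET p \<and> distinct p \<and> hd p = x \<and> last p = y"
  using tree unfolding is_tree_def is_path_wk by blast

lemma path_set: "wk ET p \<Longrightarrow> hd p \<in> VT \<Longrightarrow> set p \<subseteq> VT"
  using wk_set[of ET p VT] edge_sub by blast

lemma uniq: "wk ET p \<Longrightarrow> distinct p \<Longrightarrow> wk ET q \<Longrightarrow> distinct q \<Longrightarrow> hd p = hd q \<Longrightarrow> last p = last q \<Longrightarrow> p = q"
proof (induction p arbitrary: q)
  case Nil then show ?case by simp
next
  case (Cons x p')
  have "q \<noteq> []" using Cons.prems(3) wk_ne by blast
  then obtain q' where q: "q = x # q'" using Cons.prems(5) by (cases q) auto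
  have xq': "x \<notin> set q'" using Cons.prems(4) q by simp
  have xp': "x \<notin> set p'" using Cons.prems(2) by simp
  show ?case
  proof (cases "p' = []")
    case True
    then have "last q = x" using Cons.prems(6) by simp
    then have "q' = []" using xq' q by (cases "q' = []") auto
    then show ?thesis using True q by simp
  next
    case False
    have q'ne: "q' \<noteq> []"
    proof
      assume "q' = []"
      then have "last p' = x" using Cons.prems(6) q False by simp
      then show False using xp' False by (metis last_in_set)
    qed
    have wp': "wk ET p'" using wk_suffix[of ET "[x]" p'] Cons.prems(1) False by simp
    have wq': "wk ET q'" using wk_suffix[of ET "[x]" q'] Cons.prems(3) q q'ne by simp
    have dp': "distinct p'" using Cons.prems(2) by simp
    have dq': "distinct q'" using Cons.prems(4) q by simp
    have lst: "last p' = last q'" using Cons.prems(6) q False q'ne by simp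
    show ?thesis
    proof (cases "hd p' = hd q'")
      case True
      then have "p' = q'" using Cons.IH[OF wp' dp' wq' dq' True lst] by simp
      then show ?thesis using q by simp
    next
      case hne: False
      have "\<exists>z\<in>set p'. z \<in> set q'" using lst False q'ne by (metis last_in_set)
      then obtain as m bs where p': "p' = as @ m # bs" and mq: "m \<in> set q'" and asq: "\<forall>z\<in>set as. z \<notin> set q'"
        using split_list_first_prop[of p' "\<lambda>z. z \<in> set q'"] by blast
      obtain us vs where q': "q' = us @ m # vs" using split_list[OF mq] by blast
      define cyc where "cyc = (x # as) @ m # rev us"
      have w1: "wk ET ((x # as) @ [m])"
        using wk_prefix[of ET "(x # as) @ [m]" bs] Cons.prems(1) p' by simp
      have "wk ET ((us @ [m]) @ vs)" using wq' q' by simp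
      then have "wk ET (us @ [m])" using wk_prefix[of ET "us @ [m]" vs] by simp
      then have w2: "wk ET (m # rev us)" using wk_rev[of ET "us @ [m]"] by simp
      have wc: "wk ET cyc" unfolding cyc_def by (rule wk_join[OF w1 w2])
      have dc: "distinct cyc" unfolding cyc_def using Cons.prems(2) dq' xq' asq p' q' by auto
      have "as \<noteq> [] \<or> us \<noteq> []"
      proof (rule ccontr)
        assume "\<not> (as \<noteq> [] \<or> us \<noteq> [])"
        then have "hd p' = m" "hd q' = m" using p' q' by auto
        then show False using hne by simp
      qed
      then have len: "length cyc \<ge> 3" unfolding cyc_def by (auto simp: Suc_le_eq)
      have hq: "{x, hd q'} \<in> ET" using Cons.prems(3) q q'ne by (cases q') auto
      have "last cyc = hd q'" unfolding cyc_def q' by (cases us) (auto simp: last_rev)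
      then have "{last cyc, hd cyc} \<in> ET" using hq unfolding cyc_def by (simp add: insert_commute)
      then have "is_cycle ET cyc" unfolding is_cycle_def is_path_wk using wc dc len by simp
      then show ?thesis using no_cycle by blast
    qed
  qed
qed

lemma tpath_prop:
  assumes "x \<in> VT" "y \<in> VT"
  shows "wk ET (tpath ET x y) \<and> distinct (tpath ET x y) \<and> hd (tpath ET x y) = x \<and> last (tpath ET x y) = y"
proof -
  obtain p where p: "wk ET p \<and> distinct p \<and> hd p = x \<and> last p = y" using connected[OF assms] by blast
  have "tpath ET x y = p" unfolding tpath_def is_path_wk
  proof (rule the_equality)
    show "(wk ET p \<and> distinct p) \<and> hd p = x \<and> last p = y" using p by simp
    fix q assume "(wk ET q \<and> distinct q) \<and> hd q = x \<and> last q = y"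
    then show "q = p" using p uniq[of q p] by simp
  qed
  then show ?thesis using p by simp
qed

lemma tpath_eq:
  assumes "wk ET p" "distinct p" shows "tpath ET (hd p) (last p) = p"
  unfolding tpath_def is_path_wk
proof (rule the_equality)
  show "(wk ET p \<and> distinct p) \<and> hd p = hd p \<and> last p = last p" using assms by simp
  fix q assume "(wk ET q \<and> distinct q) \<and> hd q = hd p \<and> last q = last p"
  then show "q = p" using assms uniq[of q p] by simp
qed

lemma tpath_ne: "x \<in> VT \<Longrightarrow> y \<in> VT \<Longrightarrow> tpath ET x y \<noteq> []"
  using tpath_prop wk_ne by blast

lemma tpath_VT: "x \<in> VT \<Longrightarrow> y \<in> VT \<Longrightarrow> set (tpath ET x y) \<subseteq> VT"
  using tpath_prop path_set by metis

lemma tpath_sub: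
  assumes "wk ET w"
  shows "set (tpath ET (hd w) (last w)) \<subseteq> set w \<and> pe (tpath ET (hd w) (last w)) \<subseteq> pe w"
proof -
  obtain p where p: "wk ET p \<and> distinct p \<and> hd p = hd w \<and> last p = last w \<and> set p \<subseteq> set w \<and> pe p \<subseteq> pe w"
    using wk_to_path[OF assms] by blast
  then have "tpath ET (hd w) (last w) = p" using tpath_eq by metis
  then show ?thesis using p by simp
qed

lemma tpath_refl: "x \<in> VT \<Longrightarrow> tpath ET x x = [x]"
  using tpath_eq[of "[x]"] by simp

lemma tpath_edge: "{x,y} \<in> ET \<Longrightarrow> tpath ET x y = [x,y]"
  using tpath_eq[of "[x,y]"] edge_ne[of x y] by simp

lemma tpath_rev: "x \<in> VT \<Longrightarrow> y \<in> VT \<Longrightarrow> tpath ET y x = rev (tpath ET x y)"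
proof -
  assume a: "x \<in> VT" "y \<in> VT"
  let ?p = "tpath ET x y"
  have p: "wk ET ?p" "distinct ?p" "hd ?p = x" "last ?p = y" using tpath_prop[OF a] by auto
  have ne: "?p \<noteq> []" using p wk_ne by blast
  have "wk ET (rev ?p)" using p wk_rev by blast
  moreover have "distinct (rev ?p)" using p by simp
  moreover have "hd (rev ?p) = y" using p ne by (simp add: hd_rev)
  moreover have "last (rev ?p) = x" using p ne by (simp add: last_rev)
  ultimately show ?thesis using tpath_eq[of "rev ?p"] by simp
qed

lemma tpath_take:
  assumes "x \<in> VT" "y \<in> VT" "k < length (tpath ET x y)"
  shows "tpath ET x (tpath ET x y ! k) = take (Suc k) (tpath ET x y)"
proof -
  let ?p = "tpath ET x y"
  have p: "wk ET ?p" "distinct ?p" "hd ?p = x" "last ?p = y" using tpath_prop[OF assms(1,2)] by auto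
  have "wk ET (take (Suc k) ?p)" using wk_take p by blast
  moreover have "distinct (take (Suc k) ?p)" using p by simp
  moreover have "hd (take (Suc k) ?p) = x" using p assms(3) by (cases ?p) auto
  moreover have "last (take (Suc k) ?p) = ?p ! k" using last_take_Suc assms(3) by blast
  ultimately show ?thesis using tpath_eq[of "take (Suc k) ?p"] by simp
qed

lemma tpath_drop:
  assumes "x \<in> VT" "y \<in> VT" "k < length (tpath ET x y)"
  shows "tpath ET (tpath ET x y ! k) y = drop k (tpath ET x y)"
proof -
  let ?p = "tpath ET x y"
  have p: "wk ET ?p" "distinct ?p" "hd ?p = x" "last ?p = y" using tpath_prop[OF assms(1,2)] by auto
  have "wk ET (drop k ?p)" using wk_drop p assms(3) by blast
  moreover have "distinct (drop k ?p)" using p by simp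
  moreover have "hd (drop k ?p) = ?p ! k" using assms(3) by (simp add: hd_drop_conv_nth)
  moreover have "last (drop k ?p) = y" using p assms(3) by simp
  ultimately show ?thesis using tpath_eq[of "drop k ?p"] by simp
qed

lemma tpath_trans:
  assumes "x \<in> VT" "y \<in> VT" "z \<in> VT"
  shows "set (tpath ET x z) \<subseteq> set (tpath ET x y) \<union> set (tpath ET y z) \<and>
         pe (tpath ET x z) \<subseteq> pe (tpath ET x y) \<union> pe (tpath ET y z)"
proof -
  let ?p = "tpath ET x y" and ?q = "tpath ET y z"
  have p: "wk ET ?p" "distinct ?p" "hd ?p = x" "last ?p = y" using tpath_prop[OF assms(1,2)] by auto
  have q: "wk ET ?q" "distinct ?q" "hd ?q = y" "last ?q = z" using tpath_prop[OF assms(2,3)] by auto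
  obtain P' where P': "?p = P' @ [y]" using p wk_ne[of ET ?p] by (cases ?p rule: rev_cases) auto
  obtain Q' where Q': "?q = y # Q'" using q wk_ne[of ET ?q] by (cases ?q) auto
  define W where "W = P' @ y # Q'"
  have wW: "wk ET W" unfolding W_def using wk_join[of ET P' y Q'] p(1) q(1) P' Q' by simp
  have hW: "hd W = x" unfolding W_def using p(3) P' by (cases P') auto
  have lW: "last W = z" unfolding W_def using q(4) Q' by (cases Q') auto
  have sW: "set W = set ?p \<union> set ?q" unfolding W_def using P' Q' by auto
  have pW: "pe W = pe ?p \<union> pe ?q" unfolding W_def using P' Q' pe_append[of P' y Q'] by simp
  show ?thesis using tpath_sub[OF wW] hW lW sW pW by simp
qed

end

lemma pe_nth: "Suc j < length p \<Longrightarrow> {p ! j, p ! Suc j} \<in> pe p"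
  unfolding path_edges_pe[symmetric] path_edges_def by blast

lemma edge_other: "card e = 2 \<Longrightarrow> x \<in> e \<Longrightarrow> \<exists>y. e = {x,y} \<and> x \<noteq> y"
  unfolding card_2_iff by auto

locale ctx = tr VT ET for VT :: "'a set" and ET :: "'a set set" +
  fixes V :: "'a set" and E M :: "'a set set" and col :: "'a set \<Rightarrow> nat" and r :: 'a and dfs :: "'a \<Rightarrow> nat"
  assumes G: "simple_graph V E"
    and Mm: "perfect_matching V E M"
    and C2: "edge_2_colouring V E col"
    and T_sub: "VT \<subseteq> V" "ET \<subseteq> E - M"
    and T_big: "card VT > 1"
    and root: "r \<in> VT"
    and dfs: "dfs_ordering VT ET r dfs"
    and hyp: "\<forall>u \<in> leaves VT ET r \<union> {r}. \<forall>e\<in>ET. u \<in> e \<longrightarrow> col e = mcl M col u"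
begin

abbreviation mc where "mc x \<equiv> mcl M col x"

lemma finV: "finite V" using G unfolding simple_graph_def by blast

lemma finE: "finite E"
proof -
  have "E \<subseteq> Pow V" using G unfolding simple_graph_def by auto
  then show ?thesis by (rule finite_subset) (simp add: finV)
qed

lemma finVT: "finite VT" using finV T_sub(1) finite_subset by blast

lemma ET_E: "e \<in> ET \<Longrightarrow> e \<in> E" using T_sub(2) by blast

lemma three_col:
  assumes "z \<in> V" "e1 \<in> E" "e2 \<in> E" "e3 \<in> E" "z \<in> e1" "z \<in> e2" "z \<in> e3"
    "col e1 \<noteq> col e2" "col e1 \<noteq> col e3" "col e2 \<noteq> col e3"
  shows False
proof -
  have le: "card (col ` {e\<in>E. z \<in> e}) \<le> 2" using C2 assms(1) unfolding edge_2_colouring_def by blast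
  have fin: "finite (col ` {e\<in>E. z \<in> e})" using finE by simp
  have sub: "{col e1, col e2, col e3} \<subseteq> col ` {e\<in>E. z \<in> e}" using assms by blast
  have "card {col e1, col e2, col e3} = 3" using assms(8-10) by simp
  then have "3 \<le> card (col ` {e\<in>E. z \<in> e})" using card_mono[OF fin sub] by simp
  then show False using le by simp
qed

lemma medge: "z \<in> V \<Longrightarrow> \<exists>e. e \<in> E \<and> z \<in> e \<and> col e = mc z"
proof -
  assume z: "z \<in> V"
  have ex: "\<exists>!e. e \<in> M \<and> z \<in> e" using Mm z unfolding perfect_matching_def by blast
  have "(THE e. e \<in> M \<and> z \<in> e) \<in> M \<and> z \<in> (THE e. e \<in> M \<and> z \<in> e)" by (rule theI'[OF ex])
  moreover have "M \<subseteq> E" using Mm unfolding perfect_matching_def by blast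
  ultimately show ?thesis unfolding mcl_def by blast
qed

lemma m_unique: "{a,b} \<in> M \<Longrightarrow> {a,c} \<in> M \<Longrightarrow> b = c"
proof -
  assume ab: "{a,b} \<in> M" and ac: "{a,c} \<in> M"
  have "M \<subseteq> E" using Mm unfolding perfect_matching_def by blast
  then have cardab: "card {a,b} = 2" and "{a,b} \<subseteq> V" using ab G unfolding simple_graph_def by blast+
  then have aV: "a \<in> V" by blast
  have "\<exists>!e. e \<in> M \<and> a \<in> e" using Mm aV unfolding perfect_matching_def by blast
  then have eq: "{a,b} = {a,c}" using ab ac by blast
  have "a \<noteq> b" using cardab by (cases "a = b") auto
  then show "b = c" using eq by (metis doubleton_eq_iff)
qed

lemma dfs_inj: "inj_on dfs VT" using dfs unfolding dfs_ordering_def bij_betw_def by blast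

lemma anc:
  assumes "u \<in> VT" "w \<in> set (tpath ET r u)"
  shows "dfs w \<le> dfs u"
proof -
  have wV: "w \<in> VT" using tpath_VT[OF root assms(1)] assms(2) by blast
  have "u \<in> descendants VT ET r w" unfolding descendants_def using assms by blast
  then have "dfs u \<in> dfs ` descendants VT ET r w" by blast
  also have "\<dots> = {dfs w ..< dfs w + card (descendants VT ET r w)}" using dfs wV unfolding dfs_ordering_def by blast
  finally show ?thesis by simp
qed

lemma anc_strict:
  assumes "u \<in> VT" "w \<in> set (tpath ET r u)" "w \<noteq> u"
  shows "dfs w < dfs u"
proof -
  have wV: "w \<in> VT" using tpath_VT[OF root assms(1)] assms(2) by blast
  have "dfs w \<noteq> dfs u" using dfs_inj wV assms(1,3) unfolding inj_on_def by blast
  then show ?thesis using anc[OF assms(1,2)] by simp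
qed

lemma has_edge:
  assumes "x \<in> VT" shows "\<exists>y. {x,y} \<in> ET"
proof -
  obtain y where y: "y \<in> VT" "y \<noteq> x"
  proof -
    have "\<not> VT \<subseteq> {x}" using T_big card_mono[of "{x}" VT] by fastforce
    then show ?thesis using that by blast
  qed
  let ?p = "tpath ET x y"
  have p: "wk ET ?p" "distinct ?p" "hd ?p = x" "last ?p = y" using tpath_prop[OF assms y(1)] by auto
  obtain rest where r1: "?p = x # rest" using p wk_ne[of ET ?p] by (cases ?p) auto
  have "rest \<noteq> []" using r1 p(4) y(2) by auto
  then obtain z rest' where "rest = z # rest'" by (cases rest) auto
  then have "{x,z} \<in> ET" using p(1) r1 by simp
  then show ?thesis by blast
qed

lemma parent:
  assumes "t \<in> VT" "t \<noteq> r"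
  shows "\<exists>p0. {p0,t} \<in> ET \<and> dfs p0 < dfs t"
proof -
  let ?q = "tpath ET r t"
  have q: "wk ET ?q" "distinct ?q" "hd ?q = r" "last ?q = t" using tpath_prop[OF root assms(1)] by auto
  obtain A where A: "?q = A @ [t]" using q wk_ne[of ET ?q] by (cases ?q rule: rev_cases) auto
  have "A \<noteq> []" using A q(3) assms(2) by auto
  then obtain B p0 where B: "A = B @ [p0]" by (cases A rule: rev_cases) auto
  have "wk ET (B @ p0 # [t])" using q(1) A B by simp
  then have "wk ET [p0, t]" using wk_append[of ET B p0 "[t]"] by simp
  then have e: "{p0,t} \<in> ET" by simp
  have "p0 \<in> set ?q" using A B by simp
  moreover have "p0 \<noteq> t" using q(2) A B by auto
  ultimately have "dfs p0 < dfs t" using anc_strict[OF assms(1)] by blast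
  then show ?thesis using e by blast
qed

lemma edge_dir:
  assumes "{a,b} \<in> ET"
  shows "a \<in> set (tpath ET r b) \<or> b \<in> set (tpath ET r a)"
proof (rule disjCI)
  assume nb: "b \<notin> set (tpath ET r a)"
  have ab: "a \<in> VT" "b \<in> VT" using edge_VT[OF assms] by auto
  let ?q = "tpath ET r a"
  have q: "wk ET ?q" "distinct ?q" "hd ?q = r" "last ?q = a" using tpath_prop[OF root ab(1)] by auto
  obtain A where A: "?q = A @ [a]" using q wk_ne[of ET ?q] by (cases ?q rule: rev_cases) auto
  have w: "wk ET (A @ a # [b])" using wk_join[of ET A a "[b]"] q(1) A assms by simp
  have d: "distinct (A @ a # [b])" using q(2) A nb by auto
  have h: "hd (A @ a # [b]) = r" using q(3) A by (cases A) auto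
  have "tpath ET r b = A @ a # [b]" using tpath_eq[OF w d] h by simp
  then show "a \<in> set (tpath ET r b)" by simp
qed

lemma child:
  assumes "{t,y} \<in> ET" "dfs t < dfs y"
  shows "y \<in> children VT ET r t"
proof -
  have ty: "t \<in> VT" "y \<in> VT" using edge_VT[OF assms(1)] by auto
  have "\<not> y \<in> set (tpath ET r t)" using anc[OF ty(1)] assms(2) by fastforce
  then have "t \<in> set (tpath ET r y)" using edge_dir[OF assms(1)] by blast
  then show ?thesis unfolding children_def descendants_def using ty assms edge_ne by auto
qed

lemma dfs_path:
  assumes "u \<in> VT" "s \<in> VT" "dfs s < dfs u" "w \<in> set (tpath ET u s)" "w \<noteq> u"
  shows "dfs w < dfs u"
proof -
  have "set (tpath ET u s) \<subseteq> set (tpath ET u r) \<union> set (tpath ET r s)" using tpath_trans[OF assms(1) root assms(2)] by blast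
  also have "set (tpath ET u r) = set (tpath ET r u)" using tpath_rev[OF root assms(1)] by simp
  finally have "w \<in> set (tpath ET r u) \<or> w \<in> set (tpath ET r s)" using assms(4) by blast
  then show ?thesis
  proof
    assume "w \<in> set (tpath ET r u)" then show ?thesis using anc_strict[OF assms(1) _ assms(5)] by blast
  next
    assume "w \<in> set (tpath ET r s)" then show ?thesis using anc[OF assms(2)] assms(3) by fastforce
  qed
qed


definition cc :: "nat \<Rightarrow> 'a \<Rightarrow> 'a \<Rightarrow> bool" where
  "cc c x y \<longleftrightarrow> x \<in> VT \<and> y \<in> VT \<and> (\<forall>e\<in>pe (tpath ET x y). col e = c)"

lemma cc_refl: "x \<in> VT \<Longrightarrow> cc c x x"
  unfolding cc_def using tpath_refl by simp

lemma cc_sym: "cc c x y \<Longrightarrow> cc c y x"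
  unfolding cc_def using tpath_rev pe_rev by metis

lemma cc_trans: "cc c x y \<Longrightarrow> cc c y z \<Longrightarrow> cc c x z"
proof -
  assume a: "cc c x y" "cc c y z"
  then have v: "x \<in> VT" "y \<in> VT" "z \<in> VT" unfolding cc_def by auto
  have "pe (tpath ET x z) \<subseteq> pe (tpath ET x y) \<union> pe (tpath ET y z)" using tpath_trans[OF v] by blast
  then show ?thesis using a v unfolding cc_def by blast
qed

lemma cc_edge: "{x,y} \<in> ET \<Longrightarrow> col {x,y} = c \<Longrightarrow> cc c x y"
  unfolding cc_def using tpath_edge edge_VT by simp

lemma cc_take:
  assumes "cc c x y" "k < length (tpath ET x y)"
  shows "cc c x (tpath ET x y ! k)"
proof -
  have v: "x \<in> VT" "y \<in> VT" using assms(1) unfolding cc_def by auto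
  have "tpath ET x y ! k \<in> VT" using tpath_VT[OF v] assms(2) nth_mem by blast
  moreover have "pe (tpath ET x (tpath ET x y ! k)) \<subseteq> pe (tpath ET x y)"
    using tpath_take[OF v assms(2)] pe_take by simp
  ultimately show ?thesis using assms(1) v unfolding cc_def by blast
qed

lemma cc_VT: "cc c x y \<Longrightarrow> x \<in> VT \<and> y \<in> VT" unfolding cc_def by blast

lemma cc_class: "cc c x y \<Longrightarrow> {z. cc c x z} = {z. cc c y z}"
  using cc_sym cc_trans by blast

definition mk :: "'a \<Rightarrow> bool" where
  "mk x \<longleftrightarrow> x \<in> VT \<and> (\<exists>e\<in>ET. x \<in> e \<and> col e = mc x)"

definition K :: "'a \<Rightarrow> 'a set" where "K x = {y. cc (mc x) x y}"
definition MK :: "'a \<Rightarrow> 'a set" where "MK x = {y \<in> K x. mc y = mc x}"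
definition sv :: "'a \<Rightarrow> 'a" where "sv x = arg_min_on dfs (MK x)"
definition top :: "'a \<Rightarrow> 'a" where "top x = arg_min_on dfs (K x)"

lemma amin:
  assumes "finite S" "S \<noteq> {}"
  shows "arg_min_on dfs S \<in> S \<and> (\<forall>y\<in>S. dfs (arg_min_on dfs S) \<le> dfs y)"
  using arg_min_if_finite[OF assms, of dfs] by (meson not_le)

lemma K_sub: "K x \<subseteq> VT" unfolding K_def using cc_VT by blast

lemma leaves_mk: "l \<in> leaves VT ET r \<Longrightarrow> mk l"
proof -
  assume l: "l \<in> leaves VT ET r"
  then have lV: "l \<in> VT" unfolding leaves_def by blast
  obtain y where "{l,y} \<in> ET" using has_edge[OF lV] by blast
  moreover have "col {l,y} = mc l" using hyp l calculation by blast
  ultimately show "mk l" unfolding mk_def using lV by blast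
qed

lemma mk_nb: "mk x \<Longrightarrow> \<exists>y. y \<noteq> x \<and> y \<in> K x"
proof -
  assume "mk x"
  then obtain e where e: "e \<in> ET" "x \<in> e" "col e = mc x" unfolding mk_def by blast
  obtain y where y: "e = {x,y}" "x \<noteq> y" using edge_other[OF edge_card[OF e(1)] e(2)] by blast
  have "cc (mc x) x y" using cc_edge[of x y] e y by simp
  then show ?thesis using y unfolding K_def by (intro exI[of _ y]) auto
qed

lemma mk_K: "mk x \<Longrightarrow> x \<in> K x \<and> finite (K x)"
proof -
  assume "mk x"
  then have "x \<in> VT" unfolding mk_def by blast
  then have "x \<in> K x" unfolding K_def using cc_refl by blast
  moreover have "finite (K x)" using finite_subset[OF K_sub finVT] .
  ultimately show ?thesis by blast
qed

lemma sv_prop: "mk x \<Longrightarrow> sv x \<in> MK x \<and> (\<forall>y\<in>MK x. dfs (sv x) \<le> dfs y)"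
proof -
  assume m: "mk x"
  have "x \<in> MK x" using mk_K[OF m] unfolding MK_def by blast
  moreover have "finite (MK x)" using mk_K[OF m] unfolding MK_def by simp
  ultimately show ?thesis unfolding sv_def using amin[of "MK x"] by blast
qed

lemma top_prop: "mk x \<Longrightarrow> top x \<in> K x \<and> (\<forall>y\<in>K x. dfs (top x) \<le> dfs y)"
  unfolding top_def using amin[of "K x"] mk_K by blast

lemma top_a:
  assumes m: "mk x"
  shows "\<exists>y. {top x, y} \<in> ET \<and> col {top x, y} = mc x \<and> y \<in> K x \<and> dfs (top x) < dfs y"
proof -
  let ?t = "top x" and ?c = "mc x"
  have t: "?t \<in> K x" "\<forall>y\<in>K x. dfs ?t \<le> dfs y" using top_prop[OF m] by auto
  obtain w where w: "w \<in> K x" "w \<noteq> ?t"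
  proof -
    obtain y where y: "y \<noteq> x" "y \<in> K x" using mk_nb[OF m] by blast
    show ?thesis
    proof (cases "y = ?t")
      case True
      then show ?thesis using that[of x] mk_K[OF m] y(1) by simp
    next
      case False
      then show ?thesis using that[of y] y(2) by simp
    qed
  qed
  have ctw: "cc ?c ?t w" using t(1) w(1) cc_sym cc_trans unfolding K_def by blast
  have v: "?t \<in> VT" "w \<in> VT" using cc_VT[OF ctw] by auto
  let ?p = "tpath ET ?t w"
  have p: "wk ET ?p" "distinct ?p" "hd ?p = ?t" "last ?p = w" using tpath_prop[OF v] by auto
  obtain rest where r1: "?p = ?t # rest" using p wk_ne[of ET ?p] by (cases ?p) auto
  have "rest \<noteq> []" using r1 p(4) w(2) by auto
  then obtain y rest' where r2: "rest = y # rest'" by (cases rest) auto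
  have e: "{?t,y} \<in> ET" using p(1) r1 r2 by simp
  have "{?t,y} \<in> pe ?p" using r1 r2 by simp
  then have col: "col {?t,y} = ?c" using ctw unfolding cc_def by blast
  have "cc ?c ?t y" using cc_edge[OF e col] .
  then have yK: "y \<in> K x" using t(1) cc_trans unfolding K_def by blast
  have "y \<noteq> ?t" using p(2) r1 r2 by auto
  moreover have "y \<in> VT" using edge_VT[OF e] by blast
  ultimately have "dfs ?t \<noteq> dfs y" using dfs_inj v(1) unfolding inj_on_def by metis
  then have "dfs ?t < dfs y" using t(2) yK by fastforce
  then show ?thesis using e col yK by blast
qed

lemma top_b:
  assumes m: "mk x" and e: "{p0, top x} \<in> ET" and d: "dfs p0 < dfs (top x)"
  shows "col {p0, top x} \<noteq> mc x"
proof
  assume c: "col {p0, top x} = mc x"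
  have "{top x, p0} \<in> ET" "col {top x, p0} = mc x" using e c by (simp_all add: insert_commute)
  then have "cc (mc x) (top x) p0" using cc_edge by blast
  then have "p0 \<in> K x" using top_prop[OF m] cc_trans unfolding K_def by blast
  then show False using top_prop[OF m] d by fastforce
qed

lemma top_c: "mk x \<Longrightarrow> top x \<notin> leaves VT ET r"
  using top_a child unfolding leaves_def by blast

lemma top_d:
  assumes m: "mk x" shows "mk (top x)"
proof -
  let ?t = "top x"
  obtain y where y: "{?t, y} \<in> ET" "col {?t, y} = mc x" using top_a[OF m] by blast
  have tV: "?t \<in> VT" using top_prop[OF m] K_sub by blast
  show ?thesis
  proof (cases "?t = r")
    case True
    then have "col {?t,y} = mc ?t" using hyp y(1) by blast
    then show ?thesis unfolding mk_def using tV y(1) by blast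
  next
    case False
    obtain p0 where p0: "{p0, ?t} \<in> ET" "dfs p0 < dfs ?t" using parent[OF tV False] by blast
    have d: "col {p0, ?t} \<noteq> mc x" using top_b[OF m p0] .
    obtain e3 where e3: "e3 \<in> E" "?t \<in> e3" "col e3 = mc ?t" using medge tV T_sub(1) by blast
    have "mc ?t = mc x \<or> mc ?t = col {p0, ?t}"
    proof (rule ccontr)
      assume "\<not> (mc ?t = mc x \<or> mc ?t = col {p0, ?t})"
      then show False
        using three_col[of ?t "{?t,y}" "{p0,?t}" e3] y p0 d e3 ET_E tV T_sub(1) by auto
    qed
    then show ?thesis
    proof
      assume "mc ?t = mc x" then show ?thesis unfolding mk_def using tV y by auto
    next
      assume "mc ?t = col {p0, ?t}" then show ?thesis unfolding mk_def using tV p0 by auto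
    qed
  qed
qed

lemma top_inj:
  assumes m1: "mk x1" and m2: "mk x2" and s1: "sv x1 = x1" and s2: "sv x2 = x2" and t: "top x1 = top x2"
  shows "x1 = x2"
proof (cases "mc x1 = mc x2")
  case True
  have "cc (mc x1) x1 (top x1)" "cc (mc x2) x2 (top x2)" using top_prop m1 m2 unfolding K_def by blast+
  then have "cc (mc x1) x1 x2" using True t cc_sym cc_trans by metis
  then have "K x1 = K x2" unfolding K_def using cc_class True by metis
  then have "MK x1 = MK x2" unfolding MK_def using True by simp
  then show ?thesis using s1 s2 unfolding sv_def by metis
next
  case False
  let ?t = "top x1"
  obtain y1 where y1: "{?t, y1} \<in> ET" "col {?t, y1} = mc x1" using top_a[OF m1] by blast
  obtain y2 where y2: "{?t, y2} \<in> ET" "col {?t, y2} = mc x2" using top_a[OF m2] t by metis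
  have tV: "?t \<in> VT" using top_prop[OF m1] K_sub by blast
  show ?thesis
  proof (cases "?t = r")
    case True
    then have "col {?t,y1} = mc ?t" "col {?t,y2} = mc ?t" using hyp y1(1) y2(1) by blast+
    then show ?thesis using False y1 y2 by simp
  next
    case nr: False
    obtain p0 where p0: "{p0, ?t} \<in> ET" "dfs p0 < dfs ?t" using parent[OF tV nr] by blast
    have d1: "col {p0, ?t} \<noteq> mc x1" using top_b[OF m1 p0] .
    have d2: "col {p0, ?t} \<noteq> mc x2" using top_b[OF m2] p0 t by metis
    show ?thesis
      using three_col[of ?t "{?t,y1}" "{?t,y2}" "{p0,?t}"] y1 y2 p0 d1 d2 False ET_E tV T_sub(1) by auto
  qed
qed


definition idx :: "nat \<Rightarrow> 'a list \<Rightarrow> nat" where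
  "idx c q = (LEAST i. 0 < i \<and> i < length q \<and> mc (q ! i) = c)"

definition fm :: "nat \<Rightarrow> 'a list \<Rightarrow> 'a" where "fm c q = q ! idx c q"

definition vv :: "'a \<Rightarrow> 'a" where "vv u = fm (mc u) (tpath ET u (sv u))"

lemma idx_prop:
  assumes "0 < i0" "i0 < length q" "mc (q ! i0) = c"
  shows "0 < idx c q \<and> idx c q < length q \<and> mc (q ! idx c q) = c \<and> (\<forall>j. 0 < j \<and> j < idx c q \<longrightarrow> mc (q ! j) \<noteq> c)"
proof -
  have "0 < idx c q \<and> idx c q < length q \<and> mc (q ! idx c q) = c"
    unfolding idx_def by (rule LeastI[of _ i0]) (use assms in blast)
  moreover have "\<forall>j. 0 < j \<and> j < idx c q \<longrightarrow> mc (q ! j) \<noteq> c"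
  proof (intro allI impI)
    fix j assume j: "0 < j \<and> j < idx c q"
    show "mc (q ! j) \<noteq> c"
    proof
      assume "mc (q ! j) = c"
      moreover have "j < length q" using j calculation \<open>0 < idx c q \<and> idx c q < length q \<and> mc (q ! idx c q) = c\<close> by simp
      ultimately have "idx c q \<le> j" unfolding idx_def using j by (intro Least_le) simp
      then show False using j by simp
    qed
  qed
  ultimately show ?thesis by blast
qed

lemma idx_drop:
  assumes "0 < i0" "i0 < length q" "mc (q ! i0) = c" "0 < j" "j < idx c q"
  shows "fm c (drop j q) = fm c q"
proof -
  let ?k = "idx c q"
  have k: "0 < ?k" "?k < length q" "mc (q ! ?k) = c" "\<forall>i. 0 < i \<and> i < ?k \<longrightarrow> mc (q ! i) \<noteq> c"
    using idx_prop[OF assms(1-3)] by auto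
  have "(LEAST i. 0 < i \<and> i < length (drop j q) \<and> mc (drop j q ! i) = c) = ?k - j"
  proof (rule Least_equality)
    show "0 < ?k - j \<and> ?k - j < length (drop j q) \<and> mc (drop j q ! (?k - j)) = c"
      using k assms(5) by simp
  next
    fix i assume i: "0 < i \<and> i < length (drop j q) \<and> mc (drop j q ! i) = c"
    show "?k - j \<le> i"
    proof (rule ccontr)
      assume "\<not> ?k - j \<le> i"
      then have "j + i < ?k" by simp
      moreover have "mc (q ! (j + i)) = c" using i k(2) assms(5) by simp
      ultimately show False using k(4)[rule_format, of "j + i"] assms(4) by simp
    qed
  qed
  then have "idx c (drop j q) = ?k - j" unfolding idx_def .
  then show ?thesis unfolding fm_def using k assms(5) by simp
qed

lemma internal_take:
  assumes "k < length p" "z \<in> internal_vertices (take (Suc k) p)"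
  shows "\<exists>j. 0 < j \<and> j < k \<and> z = p ! j"
proof -
  let ?L = "butlast (tl (take (Suc k) p))"
  obtain i where i: "i < length ?L" "z = ?L ! i" using assms(2) unfolding internal_vertices_def by (metis in_set_conv_nth)
  have len: "length ?L = k - 1" using assms(1) by simp
  have "?L ! i = tl (take (Suc k) p) ! i" using i(1) by (simp add: nth_butlast)
  also have "\<dots> = take (Suc k) p ! Suc i" using i(1) len by (simp add: nth_tl)
  also have "\<dots> = p ! Suc i" using i(1) len by simp
  finally show ?thesis using i len by (intro exI[of _ "Suc i"]) simp
qed

lemma good_setup:
  assumes m: "mk u" and ns: "sv u \<noteq> u"
  shows "sv u \<in> VT \<and> cc (mc u) u (sv u) \<and> mc (sv u) = mc u \<and> dfs (sv u) < dfs u \<and>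
         1 \<le> length (tpath ET u (sv u)) - 1 \<and> length (tpath ET u (sv u)) - 1 < length (tpath ET u (sv u)) \<and>
         mc (tpath ET u (sv u) ! (length (tpath ET u (sv u)) - 1)) = mc u"
proof -
  let ?s = "sv u"
  have sp: "?s \<in> MK u" "\<forall>y\<in>MK u. dfs ?s \<le> dfs y" using sv_prop[OF m] by auto
  have uM: "u \<in> MK u" using mk_K[OF m] unfolding MK_def by blast
  have c: "cc (mc u) u ?s" "mc ?s = mc u" using sp(1) unfolding MK_def K_def by auto
  have v: "u \<in> VT" "?s \<in> VT" using cc_VT[OF c(1)] by auto
  have "dfs ?s \<noteq> dfs u" using dfs_inj v ns unfolding inj_on_def by metis
  then have d: "dfs ?s < dfs u" using sp(2) uM by fastforce
  let ?p = "tpath ET u ?s"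
  have p: "wk ET ?p" "distinct ?p" "hd ?p = u" "last ?p = ?s" using tpath_prop[OF v] by auto
  have ne: "?p \<noteq> []" using p wk_ne by blast
  have "length ?p \<noteq> 1"
  proof
    assume "length ?p = 1"
    then obtain a where "?p = [a]" by (cases ?p) auto
    then show False using p ns by simp
  qed
  moreover have "length ?p \<noteq> 0" using ne by simp
  ultimately have l2: "2 \<le> length ?p" by linarith
  have "?p ! (length ?p - 1) = ?s" using p(4) ne by (simp add: last_conv_nth)
  then show ?thesis using c v d l2 by auto
qed

lemma good:
  assumes m: "mk u" and ns: "sv u \<noteq> u"
  shows "vv u \<in> VT \<and> dfs (vv u) < dfs u \<and> vv u \<noteq> u \<and> mc (vv u) = mc u \<and>
     (\<forall>e\<in>pe (tpath ET u (vv u)). col e = mc u) \<and>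
     (\<forall>z\<in>internal_vertices (tpath ET u (vv u)). mc z \<noteq> mc u)"
proof -
  let ?s = "sv u" and ?c = "mc u"
  let ?p = "tpath ET u ?s"
  have S: "?s \<in> VT" "cc ?c u ?s" "mc ?s = ?c" "dfs ?s < dfs u" "1 \<le> length ?p - 1" "length ?p - 1 < length ?p"
    "mc (?p ! (length ?p - 1)) = ?c" using good_setup[OF m ns] by auto
  have uV: "u \<in> VT" using cc_VT[OF S(2)] by blast
  let ?k = "idx ?c ?p"
  have k: "0 < ?k" "?k < length ?p" "mc (?p ! ?k) = ?c" "\<forall>j. 0 < j \<and> j < ?k \<longrightarrow> mc (?p ! j) \<noteq> ?c"
    using idx_prop[of "length ?p - 1" ?p ?c] S(5-7) by auto
  have vdef: "vv u = ?p ! ?k" unfolding vv_def fm_def by simp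
  have p: "wk ET ?p" "distinct ?p" "hd ?p = u" "last ?p = ?s" using tpath_prop[OF uV S(1)] by auto
  have ne: "?p \<noteq> []" using p wk_ne by blast
  have vin: "vv u \<in> set ?p" using vdef k(2) by simp
  have vV: "vv u \<in> VT" using vin tpath_VT[OF uV S(1)] by blast
  have "?p ! 0 = u" using p(3) ne by (simp add: hd_conv_nth)
  moreover have "?p ! ?k \<noteq> ?p ! 0"
  proof
    assume "?p ! ?k = ?p ! 0"
    then have "?k = 0" using nth_eq_iff_index_eq[OF p(2) k(2), of 0] ne by simp
    then show False using k(1) by simp
  qed
  ultimately have vu: "vv u \<noteq> u" using vdef by simp
  have dv: "dfs (vv u) < dfs u" using dfs_path[OF uV S(1) S(4) vin vu] .
  have tp: "tpath ET u (vv u) = take (Suc ?k) ?p" using tpath_take[OF uV S(1) k(2)] vdef by simp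
  have pe: "\<forall>e\<in>pe (tpath ET u (vv u)). col e = ?c"
    using tp pe_take[of "Suc ?k" ?p] S(2) unfolding cc_def by auto
  have iv: "\<forall>z\<in>internal_vertices (tpath ET u (vv u)). mc z \<noteq> ?c"
  proof
    fix z assume "z \<in> internal_vertices (tpath ET u (vv u))"
    then obtain j where "0 < j" "j < ?k" "z = ?p ! j" using internal_take[OF k(2)] tp by auto
    then show "mc z \<noteq> ?c" using k(4) by blast
  qed
  show ?thesis using vV dv vu k(3) vdef pe iv by simp
qed

lemma good_internal:
  assumes m: "mk u" and ns: "sv u \<noteq> u" and z: "z \<in> internal_vertices (tpath ET u (vv u))"
  shows "z \<in> VT \<and> (\<exists>e\<in>ET. z \<in> e \<and> col e = mc u) \<and> mc z \<noteq> mc u \<and> cc (mc u) u z \<and>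
         fm (mc u) (tpath ET z (sv u)) = vv u"
proof -
  let ?s = "sv u" and ?c = "mc u"
  let ?p = "tpath ET u ?s"
  have S: "?s \<in> VT" "cc ?c u ?s" "mc ?s = ?c" "dfs ?s < dfs u" "1 \<le> length ?p - 1" "length ?p - 1 < length ?p"
    "mc (?p ! (length ?p - 1)) = ?c" using good_setup[OF m ns] by auto
  have uV: "u \<in> VT" using cc_VT[OF S(2)] by blast
  let ?k = "idx ?c ?p"
  have k: "0 < ?k" "?k < length ?p" "mc (?p ! ?k) = ?c" "\<forall>j. 0 < j \<and> j < ?k \<longrightarrow> mc (?p ! j) \<noteq> ?c"
    using idx_prop[of "length ?p - 1" ?p ?c] S(5-7) by auto
  have vdef: "vv u = ?p ! ?k" unfolding vv_def fm_def by simp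
  have p: "wk ET ?p" "distinct ?p" "hd ?p = u" "last ?p = ?s" using tpath_prop[OF uV S(1)] by auto
  have tp: "tpath ET u (vv u) = take (Suc ?k) ?p" using tpath_take[OF uV S(1) k(2)] vdef by simp
  obtain j where j: "0 < j" "j < ?k" "z = ?p ! j" using internal_take[OF k(2)] tp z by auto
  have jl: "Suc j < length ?p" using j k(2) by simp
  have "z \<in> set ?p" using j k(2) by simp
  then have zV: "z \<in> VT" using tpath_VT[OF uV S(1)] by blast
  have e: "{?p ! j, ?p ! Suc j} \<in> pe ?p" using pe_nth[OF jl] .
  then have eE: "{?p ! j, ?p ! Suc j} \<in> ET" using wk_edges[OF p(1)] by blast
  have ec: "col {?p ! j, ?p ! Suc j} = ?c" using e S(2) unfolding cc_def by blast
  have mz: "mc z \<noteq> ?c" using k(4) j by blast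
  have cz: "cc ?c u z" using cc_take[OF S(2)] j k(2) by simp
  have "tpath ET z ?s = drop j ?p" using tpath_drop[OF uV S(1)] j k(2) by simp
  moreover have "fm ?c (drop j ?p) = fm ?c ?p" using idx_drop[of "length ?p - 1" ?p ?c j] S(5-7) j by simp
  ultimately have "fm ?c (tpath ET z ?s) = vv u" unfolding vv_def by simp
  then show ?thesis using zV eE ec mz cz j(3) by blast
qed

lemma good_F:
  assumes m1: "mk u1" and n1: "sv u1 \<noteq> u1" and m2: "mk u2" and n2: "sv u2 \<noteq> u2" and ne: "u1 \<noteq> u2"
    and M1: "{u1, vv u1} \<in> M" and M2: "{u2, vv u2} \<in> M"
  shows "internal_vertices (tpath ET u1 (vv u1)) \<inter> internal_vertices (tpath ET u2 (vv u2)) = {}"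
proof (rule ccontr)
  assume "internal_vertices (tpath ET u1 (vv u1)) \<inter> internal_vertices (tpath ET u2 (vv u2)) \<noteq> {}"
  then obtain z where z1: "z \<in> internal_vertices (tpath ET u1 (vv u1))" and z2: "z \<in> internal_vertices (tpath ET u2 (vv u2))" by blast
  have I1: "z \<in> VT" "\<exists>e\<in>ET. z \<in> e \<and> col e = mc u1" "mc z \<noteq> mc u1" "cc (mc u1) u1 z" "fm (mc u1) (tpath ET z (sv u1)) = vv u1"
    using good_internal[OF m1 n1 z1] by auto
  have I2: "\<exists>e\<in>ET. z \<in> e \<and> col e = mc u2" "mc z \<noteq> mc u2" "cc (mc u2) u2 z" "fm (mc u2) (tpath ET z (sv u2)) = vv u2"
    using good_internal[OF m2 n2 z2] by auto
  obtain e1 where e1: "e1 \<in> ET" "z \<in> e1" "col e1 = mc u1" using I1(2) by blast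
  obtain e2 where e2: "e2 \<in> ET" "z \<in> e2" "col e2 = mc u2" using I2(1) by blast
  obtain e3 where e3: "e3 \<in> E" "z \<in> e3" "col e3 = mc z" using medge I1(1) T_sub(1) by blast
  have same: "mc u1 = mc u2"
  proof (rule ccontr)
    assume "mc u1 \<noteq> mc u2"
    then show False using three_col[of z e1 e2 e3] e1 e2 e3 I1 I2 ET_E T_sub(1) by auto
  qed
  have "cc (mc u1) u1 u2" using I1(4) I2(3) same cc_sym cc_trans by metis
  then have "K u1 = K u2" unfolding K_def using cc_class same by metis
  then have "MK u1 = MK u2" unfolding MK_def using same by simp
  then have "sv u1 = sv u2" unfolding sv_def by simp
  then have vv: "vv u1 = vv u2" using I1(5) I2(4) same by simp
  have "{vv u1, u1} \<in> M" "{vv u1, u2} \<in> M" using M1 M2 vv by (simp_all add: insert_commute)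
  then have "u1 = u2" using m_unique by blast
  then show False using ne by simp
qed

lemma counting: "card (leaves VT ET r) \<le> card {u. mk u \<and> sv u \<noteq> u}"
proof -
  let ?Mk = "{x. mk x}" and ?L = "leaves VT ET r" and ?N = "{x. mk x \<and> sv x = x}"
  have fMk: "finite ?Mk" using finite_subset[OF _ finVT, of ?Mk] unfolding mk_def by blast
  have LM: "?L \<subseteq> ?Mk" using leaves_mk by blast
  have NM: "?N \<subseteq> ?Mk" by blast
  have img: "top ` ?N \<subseteq> ?Mk - ?L" using top_c top_d by blast
  have inj: "inj_on top ?N" unfolding inj_on_def using top_inj by blast
  have "card ?N = card (top ` ?N)" using card_image[OF inj] by simp
  also have "\<dots> \<le> card (?Mk - ?L)" using card_mono[OF _ img] fMk by blast
  also have "\<dots> = card ?Mk - card ?L" using card_Diff_subset[OF finite_subset[OF LM fMk] LM] .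
  finally have cN: "card ?N \<le> card ?Mk - card ?L" .
  have "{u. mk u \<and> sv u \<noteq> u} = ?Mk - ?N" by blast
  then have "card {u. mk u \<and> sv u \<noteq> u} = card ?Mk - card ?N"
    using card_Diff_subset[OF finite_subset[OF NM fMk] NM] by simp
  moreover have "card ?L \<le> card ?Mk" using card_mono[OF fMk LM] .
  ultimately show ?thesis using cN by simp
qed

end

theorem lemma2:
  fixes V :: "'a set" and E M :: "'a set set" and col :: "'a set \<Rightarrow> nat"
    and VT :: "'a set" and ET :: "'a set set" and r :: 'a and dfs :: "'a \<Rightarrow> nat"
  assumes G: "simple_graph V E"
    and M: "perfect_matching V E M"
    and C: "optimal_2_colouring V E col"
    and T_sub: "VT \<subseteq> V" "ET \<subseteq> E - M"
    and T_tree: "is_tree VT ET"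
    and T_big: "card VT > 1"
    and root: "r \<in> VT"
    and dfs: "dfs_ordering VT ET r dfs"
    and hyp: "\<forall>u \<in> leaves VT ET r \<union> {r}. \<forall>e\<in>ET. u \<in> e \<longrightarrow> col e = mcl M col u"
  shows "\<exists>u v :: nat \<Rightarrow> 'a.
     (\<forall>i\<in>{1..card (leaves VT ET r)}. u i \<in> VT \<and> v i \<in> VT) \<and>
     inj_on u {1..card (leaves VT ET r)} \<and>
     (\<forall>i\<in>{1..card (leaves VT ET r)}.
        dfs_less dfs (u i) (v i) \<and>
        mcl M col (u i) = mcl M col (v i) \<and>
        (\<forall>e\<in>path_edges (tpath ET (u i) (v i)). col e = mcl M col (u i)) \<and>
        (\<forall>z\<in>internal_vertices (tpath ET (u i) (v i)). mcl M col z \<noteq> mcl M col (u i))) \<and>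
     (\<forall>i\<in>{1..card (leaves VT ET r)}. \<forall>j\<in>{1..card (leaves VT ET r)}.
        i \<noteq> j \<and> {u i, v i} \<in> M \<and> {u j, v j} \<in> M \<longrightarrow>
        internal_vertices (tpath ET (u i) (v i)) \<inter> internal_vertices (tpath ET (u j) (v j)) = {})"
proof -
  have C2: "edge_2_colouring V E col" using C unfolding optimal_2_colouring_def by blast
  interpret X: ctx VT ET V E M col r dfs
  proof (intro ctx.intro tr.intro ctx_axioms.intro)
    show "is_tree VT ET" by (rule T_tree)
    show "simple_graph V E" by (rule G)
    show "perfect_matching V E M" by (rule M)
    show "edge_2_colouring V E col" by (rule C2)
    show "VT \<subseteq> V" by (rule T_sub(1))
    show "ET \<subseteq> E - M" by (rule T_sub(2))
    show "card VT > 1" by (rule T_big)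
    show "r \<in> VT" by (rule root)
    show "dfs_ordering VT ET r dfs" by (rule dfs)
    show "\<forall>u \<in> leaves VT ET r \<union> {r}. \<forall>e\<in>ET. u \<in> e \<longrightarrow> col e = mcl M col u" by (rule hyp)
  qed
  let ?n = "card (leaves VT ET r)"
  let ?Good = "{u. X.mk u \<and> X.sv u \<noteq> u}"
  have fG: "finite ?Good" using finite_subset[OF _ X.finVT, of ?Good] unfolding X.mk_def by blast
  have "card {1..?n} \<le> card ?Good" using X.counting by simp
  then obtain f where f: "f ` {1..?n} \<subseteq> ?Good" "inj_on f {1..?n}"
    using card_le_inj[OF finite_atLeastAtMost fG] by blast
  have gi: "\<And>i. i \<in> {1..?n} \<Longrightarrow> X.mk (f i) \<and> X.sv (f i) \<noteq> f i" using f(1) by blast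
  define v where "v = (\<lambda>i. X.vv (f i))"
  have g: "v i \<in> VT \<and> dfs (v i) < dfs (f i) \<and> v i \<noteq> f i \<and> mcl M col (v i) = mcl M col (f i) \<and>
     (\<forall>e\<in>pe (tpath ET (f i) (v i)). col e = mcl M col (f i)) \<and>
     (\<forall>z\<in>internal_vertices (tpath ET (f i) (v i)). mcl M col z \<noteq> mcl M col (f i))"
    if i: "i \<in> {1..?n}" for i
    unfolding v_def using X.good gi[OF i] by blast
  have A: "\<forall>i\<in>{1..?n}. f i \<in> VT \<and> v i \<in> VT"
  proof
    fix i assume i: "i \<in> {1..?n}"
    then show "f i \<in> VT \<and> v i \<in> VT" using g[OF i] gi[OF i] unfolding X.mk_def by blast
  qed
  have B: "\<forall>i\<in>{1..?n}.
        dfs_less dfs (f i) (v i) \<and>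
        mcl M col (f i) = mcl M col (v i) \<and>
        (\<forall>e\<in>path_edges (tpath ET (f i) (v i)). col e = mcl M col (f i)) \<and>
        (\<forall>z\<in>internal_vertices (tpath ET (f i) (v i)). mcl M col z \<noteq> mcl M col (f i))"
  proof
    fix i assume i: "i \<in> {1..?n}"
    have gg: "v i \<in> VT \<and> dfs (v i) < dfs (f i) \<and> v i \<noteq> f i \<and> mcl M col (v i) = mcl M col (f i) \<and>
     (\<forall>e\<in>pe (tpath ET (f i) (v i)). col e = mcl M col (f i)) \<and>
     (\<forall>z\<in>internal_vertices (tpath ET (f i) (v i)). mcl M col z \<noteq> mcl M col (f i))" by (rule g[OF i])
    then show "dfs_less dfs (f i) (v i) \<and>
        mcl M col (f i) = mcl M col (v i) \<and>
        (\<forall>e\<in>path_edges (tpath ET (f i) (v i)). col e = mcl M col (f i)) \<and>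
        (\<forall>z\<in>internal_vertices (tpath ET (f i) (v i)). mcl M col z \<noteq> mcl M col (f i))"
      unfolding dfs_less_def dfs_le_def path_edges_pe by auto
  qed
  have D: "\<forall>i\<in>{1..?n}. \<forall>j\<in>{1..?n}.
        i \<noteq> j \<and> {f i, v i} \<in> M \<and> {f j, v j} \<in> M \<longrightarrow>
        internal_vertices (tpath ET (f i) (v i)) \<inter> internal_vertices (tpath ET (f j) (v j)) = {}"
  proof (intro ballI impI)
    fix i j assume i: "i \<in> {1..?n}" and j: "j \<in> {1..?n}"
      and h: "i \<noteq> j \<and> {f i, v i} \<in> M \<and> {f j, v j} \<in> M"
    have "f i \<noteq> f j" using f(2) i j h unfolding inj_on_def by blast
    then show "internal_vertices (tpath ET (f i) (v i)) \<inter> internal_vertices (tpath ET (f j) (v j)) = {}"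
      using X.good_F[of "f i" "f j"] gi[OF i] gi[OF j] h unfolding v_def by blast
  qed
  show ?thesis
    by (rule exI[of _ f], rule exI[of _ v]) (intro conjI A B D f(2))
qed

end
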